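(* Let $T_r$ be a resistive dyadic tree whose resistances satisfy $r_n^i\le\alpha^n$ for all $n\ge1$, $0\le i\le 2^n-1$, for some $\alpha\in(1,2)$. Then for every $p\in H^1(T_r)$ the sequence $\tilde p_n$ converges in $L^2(\mathbb{Z}_2)$ to a limit $\gamma_0(p)$, and $\gamma_0$ maps $H^1(T_r)$ continuously into $H^{s_\alpha}(\mathbb{Z}_2)$, where $s_\alpha=(1-\log_2\alpha)/2$: $\gamma_0(p)\in H^{s_\alpha}(\mathbb{Z}_2)$ and $\|\gamma_0(p)\|_{H^{s_\alpha}(\mathbb{Z}_2)}\le C\|p\|_{H^1(T_r)}$ with $C$ independent of $p$.
   Context: The infinite dyadic tree $T$ has vertex set $V$ equal to the disjoint union over $n\ge 0$ of the sets $\mathbb{Z}/2^n\mathbb{Z}$; $x_n^k$ denotes $k\in\mathbb{Z}/2^n\mathbb{Z}$, and $x_0^0$ is the root. For $n<m$, $\varphi_n^m:\mathbb{Z}/2^m\mathbb{Z}\to\mathbb{Z}/2^n\mathbb{Z}$ is the canonical surjection. For $n\ge1$ the edge $e_n^k$ joins $x_n^k$ to $\varphi_{n-1}^n(x_n^k)$. A resistive dyadic tree $T_r$ is $T$ with positive resistances $r_n^k$ on $e_n^k$. $|p|_{H^1}^2=\sum_{n\ge1}\sum_k |p(x_n^k)-p(\varphi_{n-1}^n(x_n^k))|^2/r_n^k$, $H^1(T_r)=\{p:V\to\mathbb{R}:|p|_{H^1}<\infty\}$ with norm $\|p\|_{H^1(T_r)}^2=|p(x_0^0)|^2+|p|_{H^1}^2$.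 $\mathbb{Z}_2$: 2-adic integers, $|\cdot|_2$ the 2-adic absolute value, $\mu$ the Haar probability measure on $\mathbb{Z}_2$. For $n\ge0$, $\tilde p_n(x)=p(x_n^a)$ where $a\in\{0,\dots,2^n-1\}$, $x\in a+2^n\mathbb{Z}_2$. $\Lambda=\mathbb{Q}_2/\mathbb{Z}_2$; $\mathcal F(f)(\lambda)=\int_{\mathbb{Z}_2}e^{-2i\pi\lambda x}f(x)\,d\mu(x)$; $H^s(\mathbb{Z}_2)$ is the completion of the locally constant functions on $\mathbb{Z}_2$ for the norm $\|f\|_{H^s(\mathbb{Z}_2)}=\big(\sum_{\lambda\in\Lambda}(1+|\lambda|_2)^{2s}|\mathcal F(f)(\lambda)|^2\big)^{1/2}$. *)

theory Defs
  imports "HOL-Probability.Probability"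
begin

text \<open>The 2-adic integers are modelled by their binary digit sequences:
  x :: nat \<Rightarrow> bool represents the 2-adic integer sum_i (if x i then 2^i else 0).
  The Haar probability measure on Z_2 corresponds to the product of fair coin flips.\<close>

type_synonym Z2 = "nat \<Rightarrow> bool"

definition haar :: "Z2 measure" where
  "haar = PiM UNIV (\<lambda>_::nat. measure_pmf (bernoulli_pmf (1/2)))"

definition res :: "nat \<Rightarrow> Z2 \<Rightarrow> nat" where
  "res n x = (\<Sum>i<n. if x i then 2^i else 0)"

text \<open>Vertices x_n^k of the dyadic tree are pairs (n,k) with k < 2^n;
  functions on vertices are p :: nat \<Rightarrow> nat \<Rightarrow> real (values with k \<ge> 2^n are irrelevant).
  The parent of x_n^k is x_(n-1)^(k mod 2^(n-1)).\<close>

definition H1_semi_sq :: "(nat \<Rightarrow> nat \<Rightarrow> real) \<Rightarrow> (nat \<Rightarrow> nat \<Rightarrow> real) \<Rightarrow> nat \<Rightarrow> real" where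
  "H1_semi_sq r p n = (\<Sum>k<2^(Suc n). (p (Suc n) k - p n (k mod 2^n))^2 / r (Suc n) k)"

definition in_H1 :: "(nat \<Rightarrow> nat \<Rightarrow> real) \<Rightarrow> (nat \<Rightarrow> nat \<Rightarrow> real) \<Rightarrow> bool" where
  "in_H1 r p \<longleftrightarrow> summable (H1_semi_sq r p)"

definition H1_norm :: "(nat \<Rightarrow> nat \<Rightarrow> real) \<Rightarrow> (nat \<Rightarrow> nat \<Rightarrow> real) \<Rightarrow> real" where
  "H1_norm r p = sqrt ((p 0 0)^2 + (\<Sum>n. H1_semi_sq r p n))"

definition ptilde :: "(nat \<Rightarrow> nat \<Rightarrow> real) \<Rightarrow> nat \<Rightarrow> Z2 \<Rightarrow> real" where
  "ptilde p n x = p n (res n x)"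

definition in_L2 :: "(Z2 \<Rightarrow> real) \<Rightarrow> bool" where
  "in_L2 f \<longleftrightarrow> f \<in> borel_measurable haar \<and> integrable haar (\<lambda>x. (f x)^2)"

text \<open>Lambda = Q_2/Z_2, represented by the dyadic rationals in [0,1).\<close>
definition Lambda :: "rat set" where
  "Lambda = {q. 0 \<le> q \<and> q < 1 \<and> (\<exists>m::nat. q * 2^m \<in> \<int>)}"

definition dyad_ord :: "rat \<Rightarrow> nat" where
  "dyad_ord q = (LEAST m. q * 2^m \<in> \<int>)"

definition abs2 :: "rat \<Rightarrow> real" where
  "abs2 q = (if q = 0 then 0 else 2 ^ dyad_ord q)"

text \<open>The character x \<mapsto> exp(-2 i pi lambda x), well defined since lambda * 2^m \<in> Z.\<close>
definition chr :: "rat \<Rightarrow> Z2 \<Rightarrow> complex" where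
  "chr q x = cis (- 2 * pi * (real_of_rat q * real (res (dyad_ord q) x)))"

definition fourier :: "(Z2 \<Rightarrow> real) \<Rightarrow> rat \<Rightarrow> complex" where
  "fourier f q = (LINT x|haar. chr q x * complex_of_real (f x))"

text \<open>H^s(Z_2): the completion of locally constant functions for the Fourier-weighted norm,
  realised inside L^2(Z_2) (the weights are \<ge> 1, so the completion embeds in L^2).\<close>
definition Hs_weight :: "real \<Rightarrow> (Z2 \<Rightarrow> real) \<Rightarrow> rat \<Rightarrow> real" where
  "Hs_weight t f q = (1 + abs2 q) powr (2*t) * (cmod (fourier f q))^2"

definition in_Hs :: "real \<Rightarrow> (Z2 \<Rightarrow> real) \<Rightarrow> bool" where
  "in_Hs t f \<longleftrightarrow> in_L2 f \<and> Hs_weight t f summable_on Lambda"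

definition Hs_norm :: "real \<Rightarrow> (Z2 \<Rightarrow> real) \<Rightarrow> real" where
  "Hs_norm t f = sqrt (infsum (Hs_weight t f) Lambda)"

end

theory Submission
  imports Defs
begin


lemma haar_pps: "product_prob_space (\<lambda>_::nat. measure_pmf (bernoulli_pmf (1/2)))"
  unfolding product_prob_space_def product_prob_space_axioms_def product_sigma_finite_def
  by (auto simp: prob_space_measure_pmf prob_space_imp_sigma_finite)

interpretation H: product_prob_space "\<lambda>_::nat. measure_pmf (bernoulli_pmf (1/2))" UNIV
  by (rule haar_pps)

lemma prob_haar: "prob_space haar"
  unfolding haar_def by (rule H.P.prob_space_axioms)

interpretation HP: prob_space haar by (rule prob_haar)

lemma space_haar[simp]: "space haar = UNIV"
  by (simp add: haar_def space_PiM)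

lemma res_Suc: "res (Suc n) x = res n x + (if x n then 2^n else 0)"
  by (simp add: res_def)

lemma res_0[simp]: "res 0 x = 0" by (simp add: res_def)

lemma res_lt: "res n x < 2^n"
  by (induction n) (auto simp: res_Suc)

lemma res_horner: "res n x = horner_sum of_bool 2 (map x [0..<n])"
  by (simp add: res_def horner_sum_eq_sum lessThan_atLeast0 sum.inter_restrict if_distrib)

lemma res_eq_iff: "k < 2^n \<Longrightarrow> res n x = k \<longleftrightarrow> (\<forall>i<n. x i = bit k i)"
proof
  assume k: "k < 2^n" and e: "res n x = k"
  show "\<forall>i<n. x i = bit k i"
    using e by (auto simp: res_horner bit_horner_sum_bit_iff)
next
  assume k: "k < 2^n" and b: "\<forall>i<n. x i = bit k i"
  have "res n x = horner_sum of_bool 2 (map (bit k) [0..<n])" unfolding res_horner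
    using b by (intro arg_cong[where f="horner_sum of_bool 2"] map_cong) auto
  then have "res n x = take_bit n k" by (simp add: horner_sum_bit_eq_take_bit)
  then show "res n x = k" using k by (simp add: take_bit_nat_eq_self)
qed

lemma res_set_emb: "k < 2^n \<Longrightarrow> {x. res n x = k} =
   prod_emb UNIV (\<lambda>_::nat. measure_pmf (bernoulli_pmf (1/2))) {..<n} (PiE {..<n} (\<lambda>i. {bit k i}))"
proof -
  assume k: "k < 2^n"
  show ?thesis
  proof (rule set_eqI)
    fix x :: "nat \<Rightarrow> bool"
    have "x \<in> prod_emb UNIV (\<lambda>_::nat. measure_pmf (bernoulli_pmf (1/2))) {..<n} (PiE {..<n} (\<lambda>i. {bit k i}))
       \<longleftrightarrow> restrict x {..<n} \<in> PiE {..<n} (\<lambda>i. {bit k i})"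
      by (simp add: prod_emb_iff)
    also have "\<dots> \<longleftrightarrow> (\<forall>i<n. x i = bit k i)"
      by (auto simp: PiE_iff)
    finally show "x \<in> {x. res n x = k} \<longleftrightarrow> x \<in> prod_emb UNIV (\<lambda>_::nat. measure_pmf (bernoulli_pmf (1/2))) {..<n} (PiE {..<n} (\<lambda>i. {bit k i}))"
      using res_eq_iff[OF k] by simp
  qed
qed

lemma emeasure_res: "k < 2^n \<Longrightarrow> emeasure haar {x. res n x = k} = ennreal (1/2^n)"
proof -
  assume k: "k < 2^n"
  have "emeasure haar {x. res n x = k} = (\<Prod>i\<in>{..<n}. emeasure (measure_pmf (bernoulli_pmf (1/2))) {bit k i})"
    unfolding res_set_emb[OF k] haar_def by (rule H.emeasure_PiM_emb) auto
  also have "\<dots> = (\<Prod>i\<in>{..<n}. ennreal (1/2))"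
    by (intro prod.cong refl) (simp add: emeasure_pmf_single)
  also have "\<dots> = ennreal (1/2) ^ n"
    by (simp only: prod_constant card_lessThan)
  also have "\<dots> = ennreal ((1/2) ^ n)"
    by (rule ennreal_power) simp
  also have "\<dots> = ennreal (1/2^n)"
    by (simp only: power_one_over)
  finally show ?thesis .
qed

lemma sets_res[measurable]: "res n \<in> measurable haar (count_space UNIV)"
proof (subst measurable_count_space_eq2_countable, intro conjI ballI)
  fix a :: nat
  show "res n -` {a} \<inter> space haar \<in> sets haar"
  proof (cases "a < 2^n")
    case True
    then have "res n -` {a} \<inter> space haar = {x. res n x = a}" by auto
    have "{x. res n x = a} \<in> sets haar" unfolding res_set_emb[OF True] haar_def
      by (rule sets_PiM_I) auto
    then show ?thesis using \<open>res n -` {a} \<inter> space haar = {x. res n x = a}\<close> by simp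
  next
    case False
    then have "res n -` {a} \<inter> space haar = {}" by (auto simp: not_less) (metis leD res_lt)
    then show ?thesis by simp
  qed
qed simp

lemma meas_res_fun[measurable]: "(\<lambda>x. f (res n x)) \<in> borel_measurable haar"
  by (rule measurable_compose[OF sets_res]) simp

lemma measure_res: "k < 2^n \<Longrightarrow> measure haar {x. res n x = k} = 1/2^n"
  by (simp add: measure_def emeasure_res)

lemma sets_res_eq[measurable]: "{x. res n x = k} \<in> sets haar"
proof -
  have "{x. res n x = k} = res n -` {k} \<inter> space haar" by auto
  then show ?thesis using measurable_sets[OF sets_res, of "{k}"] by simp
qed

lemma res_fun_sum: fixes F :: "nat \<Rightarrow> 'a::real_vector" shows "F (res n x) = (\<Sum>k<2^n. indicator {y. res n y = k} x *\<^sub>R F k)"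
proof -
  have "(\<Sum>k<2^n. indicator {y. res n y = k} x *\<^sub>R F k) = (\<Sum>k<2^n. if k = res n x then F k else 0)"
    by (intro sum.cong) (auto simp: indicator_def)
  also have "\<dots> = F (res n x)" using res_lt[of n x] by (simp add: sum.delta)
  finally show ?thesis by simp
qed

lemma res_fun_sum': fixes F :: "nat \<Rightarrow> 'a::real_vector" shows "(\<lambda>x. F (res n x)) = (\<lambda>x. \<Sum>k<2^n. indicator {y. res n y = k} x *\<^sub>R F k)"
  by (rule ext) (rule res_fun_sum)

lemma integrable_res[simp, intro]:
  fixes F :: "nat \<Rightarrow> 'a::{banach, second_countable_topology}"
  shows "integrable haar (\<lambda>x. F (res n x))"
  unfolding res_fun_sum'[of F n]
  apply (rule Bochner_Integration.integrable_sum) apply (rule integrable_scaleR_left) apply (rule integrable_real_indicator)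
  by (auto simp: emeasure_res)

lemma integral_res:
  fixes F :: "nat \<Rightarrow> 'a::{banach, second_countable_topology}"
  shows "integral\<^sup>L haar (\<lambda>x. F (res n x)) = (1/2^n) *\<^sub>R (\<Sum>k<2^n. F k)"
proof -
  have "integral\<^sup>L haar (\<lambda>x. F (res n x)) = (\<Sum>k<2^n. integral\<^sup>L haar (\<lambda>x. indicator {y. res n y = k} x *\<^sub>R F k))"
    unfolding res_fun_sum'[of F n]
    apply (rule Bochner_Integration.integral_sum) apply (rule integrable_scaleR_left) apply (rule integrable_real_indicator)
    by (auto simp: emeasure_res)
  also have "\<dots> = (\<Sum>k<2^n. (1/2^n) *\<^sub>R F k)"
    by (intro sum.cong refl) (simp add: integral_scaleR_left measure_res emeasure_res)
  finally show ?thesis by (simp add: scaleR_sum_right)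
qed
lemma integral_res_real:
  fixes F :: "nat \<Rightarrow> real"
  shows "integral\<^sup>L haar (\<lambda>x. F (res n x)) = (\<Sum>k<2^n. F k) / 2^n"
  using integral_res[of F n] by simp

lemma integral_res_complex:
  fixes F :: "nat \<Rightarrow> complex"
  shows "integral\<^sup>L haar (\<lambda>x. F (res n x)) = (\<Sum>k<2^n. F k) / 2^n"
  using integral_res[of F n] by (simp add: scaleR_conv_of_real)



lemma res_mod: "m \<le> M \<Longrightarrow> res m x = res M x mod 2^m"
proof -
  assume "m \<le> M"
  have "take_bit m (res M x) = horner_sum of_bool 2 (take m (map x [0..<M]))"
    by (simp add: res_horner take_bit_horner_sum_bit_eq)
  also have "take m (map x [0..<M]) = map x [0..<m]"
    using \<open>m \<le> M\<close> by (simp add: take_map)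
  finally show ?thesis by (simp add: res_horner take_bit_eq_mod)
qed

lemma lam_int: "q \<in> Lambda \<Longrightarrow> q * 2^(dyad_ord q) \<in> \<int>"
  unfolding Lambda_def dyad_ord_def by (auto intro: LeastI_ex)

lemma lam_min: "m < dyad_ord q \<Longrightarrow> q * 2^m \<notin> \<int>"
  unfolding dyad_ord_def by (rule not_less_Least)

lemma lam_le: "q * 2^m \<in> \<int> \<Longrightarrow> dyad_ord q \<le> m"
  unfolding dyad_ord_def by (rule Least_le)

lemma lam_range: "q \<in> Lambda \<Longrightarrow> 0 \<le> q \<and> q < 1"
  unfolding Lambda_def by auto

lemma lam_ord0: assumes "q \<in> Lambda" "dyad_ord q = 0" shows "q = 0"
proof -
  have "q \<in> \<int>" using lam_int[OF assms(1)] assms(2) by simp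
  then obtain j where j: "q = of_int j" by (auto elim: Ints_cases)
  then show ?thesis using lam_range[OF assms(1)] by simp
qed

lemma real_Ints: "(q::rat) \<in> \<int> \<Longrightarrow> real_of_rat q \<in> \<int>"
  by (auto elim!: Ints_cases)

lemma real_Ints': "real_of_rat q \<in> \<int> \<Longrightarrow> (q::rat) \<in> \<int>"
proof -
  assume "real_of_rat q \<in> \<int>"
  then obtain j where "real_of_rat q = of_int j" by (auto elim: Ints_cases)
  then have "real_of_rat q = real_of_rat (of_int j)" by simp
  then have "q = of_int j" by (simp only: of_rat_eq_iff)
  then show ?thesis by simp
qed

lemma cis_res_change:
  assumes "\<theta> * 2^m \<in> \<int>" "m \<le> M"
  shows "cis (2 * pi * (\<theta> * real (res M x))) = cis (2 * pi * (\<theta> * real (res m x)))"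
proof -
  have e: "res M x = res m x + 2^m * (res M x div 2^m)"
    using res_mod[OF assms(2), of x] by simp
  have "2 * pi * (\<theta> * real (res M x)) = 2 * pi * (\<theta> * real (res m x)) + 2 * pi * ((\<theta> * 2^m) * real (res M x div 2^m))"
    by (subst e) (simp add: algebra_simps)
  moreover have "(\<theta> * 2^m) * real (res M x div 2^m) \<in> \<int>"
    by (rule Ints_mult[OF assms(1)]) (simp add: Ints_of_nat)
  ultimately show ?thesis by (simp add: cis_mult[symmetric])
qed

lemma cis_half_odd:
  assumes "2 * t \<in> \<int>" "t \<notin> \<int>"
  shows "cis (2 * pi * t) = -1"
proof -
  obtain j where j: "2 * t = of_int j" using assms(1) by (auto elim: Ints_cases)
  have "odd j"
  proof
    assume "even j"
    then obtain i where "j = 2 * i" by auto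
    then have "t = of_int i" using j by simp
    then show False using assms(2) by simp
  qed
  then obtain i where i: "j = 2 * i + 1" by (auto elim: oddE)
  have "2 * pi * t = 2 * pi * of_int i + pi"
    using j i by (simp add: algebra_simps)
  then show ?thesis by (simp add: cis_mult[symmetric] cis.ctr complex_eq_iff)
qed

lemma sum_double_split: "(\<Sum>k<2*N. f k) = (\<Sum>k<N. f k) + (\<Sum>k<N. f (k + N)) " for f :: "nat \<Rightarrow> 'a::comm_monoid_add"
proof -
  have "(\<Sum>k<2*N. f k) = (\<Sum>k\<in>{0..<N}. f k) + (\<Sum>k\<in>{N..<2*N}. f k)"
    by (simp add: sum.atLeastLessThan_concat lessThan_atLeast0)
  also have "(\<Sum>k\<in>{N..<2*N}. f k) = (\<Sum>k\<in>{0+N..<N+N}. f k)" by (simp add: mult_2)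
  also have "\<dots> = (\<Sum>k\<in>{0..<N}. f (k + N))" by (rule sum.shift_bounds_nat_ivl)
  finally show ?thesis by (simp add: lessThan_atLeast0)
qed

lemma vanish:
  fixes F :: "nat \<Rightarrow> complex"
  assumes "\<theta> * 2^Suc m \<in> \<int>" "\<theta> * 2^m \<notin> \<int>" "n \<le> m"
  shows "integral\<^sup>L haar (\<lambda>x. cis (2 * pi * (\<theta> * real (res (Suc m) x))) * F (res n x)) = 0"
proof -
  define \<Phi> where "\<Phi> k = cis (2 * pi * (\<theta> * real k)) * F (k mod 2^n)" for k
  have eq: "(\<lambda>x. cis (2 * pi * (\<theta> * real (res (Suc m) x))) * F (res n x)) = (\<lambda>x. \<Phi> (res (Suc m) x))"
    using res_mod[of n "Suc m"] assms(3) by (auto simp: \<Phi>_def)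
  have c: "cis (2 * pi * (\<theta> * 2^m)) = -1"
    using assms(1,2) by (intro cis_half_odd) (auto simp: algebra_simps)
  have md: "(k + 2^m) mod 2^n = k mod (2::nat)^n" for k
  proof -
    have "(2::nat)^n dvd 2^m" using assms(3) by (simp add: le_imp_power_dvd)
    then show ?thesis by (auto elim!: dvdE simp: mod_add_right_eq[symmetric])
  qed
  have sh: "\<Phi> (k + 2^m) = - \<Phi> k" for k
  proof -
    have "cis (2 * pi * (\<theta> * real (k + 2^m))) = cis (2 * pi * (\<theta> * real k)) * cis (2 * pi * (\<theta> * 2^m))"
      by (simp add: cis_mult algebra_simps)
    then show ?thesis by (simp add: \<Phi>_def md c)
  qed
  have "(\<Sum>k<2^Suc m. \<Phi> k) = 0"
    by (simp add: sum_double_split sh sum_negf)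
  then show ?thesis unfolding eq by (simp add: integral_res_complex)
qed

lemma chr_meas[measurable]: "chr q \<in> borel_measurable haar"
proof -
  have "chr q = (\<lambda>x. (\<lambda>k. cis (- 2 * pi * (real_of_rat q * real k))) (res (dyad_ord q) x))"
    by (rule ext) (simp add: chr_def)
  then show ?thesis by simp
qed

lemma norm_chr[simp]: "cmod (chr q x) = 1"
  by (simp add: chr_def)

lemma chr_change:
  assumes "q \<in> Lambda" "dyad_ord q \<le> M"
  shows "chr q x = cis (2 * pi * (- real_of_rat q * real (res M x)))"
proof -
  have "(- real_of_rat q) * 2^(dyad_ord q) \<in> \<int>"
    using real_Ints[OF lam_int[OF assms(1)]] by (simp add: of_rat_mult of_rat_power)
  from cis_res_change[OF this assms(2)] show ?thesis by (simp add: chr_def)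
qed

lemma chr_orth_level:
  fixes F :: "nat \<Rightarrow> complex"
  assumes "q \<in> Lambda" "n < dyad_ord q"
  shows "integral\<^sup>L haar (\<lambda>x. chr q x * F (res n x)) = 0"
proof -
  obtain m where m: "dyad_ord q = Suc m" using assms(2) by (cases "dyad_ord q") auto
  have a1: "(- real_of_rat q) * 2^Suc m \<in> \<int>"
    using real_Ints[OF lam_int[OF assms(1)]] m by (simp add: of_rat_mult of_rat_power)
  have a2: "(- real_of_rat q) * 2^m \<notin> \<int>"
  proof
    assume "(- real_of_rat q) * 2^m \<in> \<int>"
    then have "real_of_rat (q * 2^m) \<in> \<int>"
      using Ints_minus by (fastforce simp: of_rat_mult of_rat_power)
    then have "q * 2^m \<in> \<int>" by (rule real_Ints')
    then show False using lam_min[of m q] m by simp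
  qed
  have "(\<lambda>x. chr q x * F (res n x)) = (\<lambda>x. cis (2 * pi * (- real_of_rat q * real (res (Suc m) x))) * F (res n x))"
    using chr_change[OF assms(1), of "Suc m"] m by auto
  then show ?thesis using vanish[OF a1 a2, of n F] assms(2) m by simp
qed



lemma chr_orth:
  assumes q: "q \<in> Lambda" and q': "q' \<in> Lambda" and ne: "q \<noteq> q'"
  shows "integral\<^sup>L haar (\<lambda>x. cnj (chr q x) * chr q' x) = 0"
proof -
  define M where "M = max (dyad_ord q) (dyad_ord q')"
  define \<theta> where "\<theta> = real_of_rat (q - q')"
  have e: "cnj (chr q x) * chr q' x = cis (2 * pi * (\<theta> * real (res M x)))" for x
    using chr_change[OF q, of M x] chr_change[OF q', of M x]
    by (simp add: M_def \<theta>_def cis_cnj cis_mult of_rat_diff algebra_simps)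
  have iM: "\<theta> * 2^M \<in> \<int>"
  proof -
    have "real_of_rat q * 2^M \<in> \<int>"
    proof -
      have "real_of_rat q * 2^(dyad_ord q) \<in> \<int>"
        using real_Ints[OF lam_int[OF q]] by (simp add: of_rat_mult of_rat_power)
      then have "real_of_rat q * 2^(dyad_ord q) * 2^(M - dyad_ord q) \<in> \<int>"
        by (rule Ints_mult) simp
      then show ?thesis by (simp add: M_def mult.assoc power_add[symmetric])
    qed
    moreover have "real_of_rat q' * 2^M \<in> \<int>"
    proof -
      have "real_of_rat q' * 2^(dyad_ord q') \<in> \<int>"
        using real_Ints[OF lam_int[OF q']] by (simp add: of_rat_mult of_rat_power)
      then have "real_of_rat q' * 2^(dyad_ord q') * 2^(M - dyad_ord q') \<in> \<int>"
        by (rule Ints_mult) simp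
      then show ?thesis by (simp add: M_def mult.assoc power_add[symmetric])
    qed
    ultimately show ?thesis by (simp add: \<theta>_def of_rat_diff left_diff_distrib Ints_diff)
  qed
  define m0 where "m0 = (LEAST m. \<theta> * 2^m \<in> \<int>)"
  have m0i: "\<theta> * 2^m0 \<in> \<int>" unfolding m0_def by (rule LeastI[of _ M]) (rule iM)
  have m0M: "m0 \<le> M" unfolding m0_def by (rule Least_le) (rule iM)
  have nI: "\<theta> \<notin> \<int>"
  proof
    assume "\<theta> \<in> \<int>"
    then have "q - q' \<in> \<int>" unfolding \<theta>_def by (rule real_Ints')
    then obtain j where j: "q - q' = of_int j" by (auto elim: Ints_cases)
    have "-1 < q - q'" "q - q' < 1" using lam_range[OF q] lam_range[OF q'] by auto
    then have "j = 0" using j by simp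
    then show False using j ne by simp
  qed
  obtain m where m: "m0 = Suc m" using m0i nI by (cases m0) auto
  have nm: "\<theta> * 2^m \<notin> \<int>" unfolding m0_def
    using not_less_Least[of m "\<lambda>m. \<theta> * 2^m \<in> \<int>"] m m0_def by simp
  have "(\<lambda>x. cnj (chr q x) * chr q' x) = (\<lambda>x. cis (2 * pi * (\<theta> * real (res (Suc m) x))) * (\<lambda>_. 1) (res 0 x))"
    using e cis_res_change[OF m0i m0M] m by auto
  then show ?thesis using vanish[of \<theta> m 0 "\<lambda>_. 1"] m0i m nm by simp
qed

lemma chr_norm1: "cnj (chr q x) * chr q x = 1"
  using complex_norm_square[of "chr q x"] by (simp add: mult.commute)

lemma chr_orth_full:
  assumes "q \<in> Lambda" "q' \<in> Lambda"
  shows "integral\<^sup>L haar (\<lambda>x. cnj (chr q x) * chr q' x) = (if q = q' then 1 else 0)"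
  using chr_orth[OF assms] HP.prob_space by (auto simp: chr_norm1)

lemma in_L2_integrable:
  assumes "in_L2 h" shows "integrable haar h"
proof -
  have "h \<in> borel_measurable haar" "integrable haar (\<lambda>x. (h x)^2)" using assms by (auto simp: in_L2_def)
  then show ?thesis by (rule HP.square_integrable_imp_integrable)
qed

lemma integrable_chr_mult:
  assumes "integrable haar h"
  shows "integrable haar (\<lambda>x. chr q x * complex_of_real (h x))"
    and "integrable haar (\<lambda>x. cnj (chr q x) * complex_of_real (h x))"
proof -
  have hm: "h \<in> borel_measurable haar" using assms by (rule borel_measurable_integrable)
  have m1: "(\<lambda>x. chr q x * complex_of_real (h x)) \<in> borel_measurable haar"
    by (intro borel_measurable_times chr_meas measurable_compose[OF hm] borel_measurable_of_real)
  have m2: "(\<lambda>x. cnj (chr q x) * complex_of_real (h x)) \<in> borel_measurable haar"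
    by (intro borel_measurable_times borel_measurable_continuous_on[OF continuous_on_cnj[OF continuous_on_id]] chr_meas measurable_compose[OF hm] borel_measurable_of_real)
  show "integrable haar (\<lambda>x. chr q x * complex_of_real (h x))"
    by (rule Bochner_Integration.integrable_bound[OF assms m1]) (simp add: norm_mult)
  show "integrable haar (\<lambda>x. cnj (chr q x) * complex_of_real (h x))"
    by (rule Bochner_Integration.integrable_bound[OF assms m2]) (simp add: norm_mult)
qed

lemma integrable_chr_chr:
  "integrable haar (\<lambda>x. cnj (chr q x) * chr q' x)"
proof -
  have m: "(\<lambda>x. cnj (chr q x) * chr q' x) \<in> borel_measurable haar"
    by (intro borel_measurable_times borel_measurable_continuous_on[OF continuous_on_cnj[OF continuous_on_id]] chr_meas)
  show ?thesis
    by (rule Bochner_Integration.integrable_bound[OF HP.integrable_const[of "1::real"] m]) (simp add: norm_mult)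
qed



lemma bessel:
  assumes L: "in_L2 h" and F: "finite F" "F \<subseteq> Lambda"
  shows "(\<Sum>q\<in>F. (cmod (fourier h q))\<^sup>2) \<le> integral\<^sup>L haar (\<lambda>x. (h x)\<^sup>2)"
proof -
  have hi: "integrable haar h" by (rule in_L2_integrable[OF L])
  have h2: "integrable haar (\<lambda>x. (h x)\<^sup>2)" using L by (simp add: in_L2_def)
  define c where "c q = fourier h q" for q
  define H where "H x = complex_of_real (h x)" for x
  define u where "u x = (\<Sum>q\<in>F. c q * cnj (chr q x))" for x
  have ic1: "integrable haar (\<lambda>x. chr q x * H x)" for q
    unfolding H_def by (rule integrable_chr_mult(1)[OF hi])
  have ic2: "integrable haar (\<lambda>x. cnj (chr q x) * H x)" for q
    unfolding H_def by (rule integrable_chr_mult(2)[OF hi])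
  have c1: "integral\<^sup>L haar (\<lambda>x. chr q x * H x) = c q" for q
    by (simp add: c_def fourier_def H_def)
  have c2: "integral\<^sup>L haar (\<lambda>x. cnj (chr q x) * H x) = cnj (c q)" for q
  proof -
    have "integral\<^sup>L haar (\<lambda>x. cnj (chr q x) * H x) = integral\<^sup>L haar (\<lambda>x. cnj (chr q x * H x))"
      by (rule Bochner_Integration.integral_cong) (simp_all add: H_def)
    also have "\<dots> = cnj (c q)" by (subst Bochner_Integration.integral_cnj) (simp only: c1)
    finally show ?thesis .
  qed
  have HH: "integrable haar (\<lambda>x. H x * H x)"
  proof -
    have "(\<lambda>x. H x * H x) = (\<lambda>x. complex_of_real ((h x)\<^sup>2))"
      by (simp add: H_def power2_eq_square)
    then show ?thesis using integrable_of_real[OF h2] by (simp only:)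
  qed
  have HHi: "integral\<^sup>L haar (\<lambda>x. H x * H x) = complex_of_real (integral\<^sup>L haar (\<lambda>x. (h x)\<^sup>2))"
  proof -
    have "(\<lambda>x. H x * H x) = (\<lambda>x. complex_of_real ((h x)\<^sup>2))"
      by (simp add: H_def power2_eq_square)
    then show ?thesis by (simp only: integral_complex_of_real)
  qed
  define A where "A x = (\<Sum>q\<in>F. cnj (c q) * (chr q x * H x))" for x
  define B where "B x = (\<Sum>q\<in>F. c q * (cnj (chr q x) * H x))" for x
  define C where "C x = (\<Sum>q\<in>F. \<Sum>q'\<in>F. (c q * cnj (c q')) * (cnj (chr q x) * chr q' x))" for x
  have cu: "cnj (u x) = (\<Sum>q\<in>F. cnj (c q) * chr q x)" for x
    by (simp add: u_def)
  have pw: "complex_of_real ((cmod (H x - u x))\<^sup>2) = H x * H x - A x - B x + C x" for x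
  proof -
    have "complex_of_real ((cmod (H x - u x))\<^sup>2) = (H x - u x) * (H x - cnj (u x))"
      by (subst complex_norm_square) (simp add: H_def)
    also have "\<dots> = H x * H x - H x * cnj (u x) - u x * H x + u x * cnj (u x)"
      by (simp add: algebra_simps)
    also have "H x * cnj (u x) = A x"
      unfolding cu A_def sum_distrib_left by (simp add: algebra_simps)
    also have "u x * H x = B x"
      unfolding u_def B_def sum_distrib_right by (simp add: algebra_simps)
    also have "u x * cnj (u x) = C x"
      unfolding cu unfolding u_def C_def sum_product by (simp add: algebra_simps)
    finally show ?thesis .
  qed
  have iA: "integrable haar A" unfolding A_def
    by (intro Bochner_Integration.integrable_sum integrable_mult_right ic1)
  have iB: "integrable haar B" unfolding B_def
    by (intro Bochner_Integration.integrable_sum integrable_mult_right ic2)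
  have iC: "integrable haar C" unfolding C_def
    by (intro Bochner_Integration.integrable_sum integrable_mult_right integrable_chr_chr)
  have vA: "integral\<^sup>L haar A = (\<Sum>q\<in>F. cnj (c q) * c q)" unfolding A_def
    by (subst Bochner_Integration.integral_sum) (auto intro: ic1 simp: c1)
  have vB0: "integral\<^sup>L haar B = (\<Sum>q\<in>F. c q * cnj (c q))" unfolding B_def
    by (subst Bochner_Integration.integral_sum) (auto intro: ic2 simp: c2)
  have "(\<Sum>q\<in>F. c q * cnj (c q)) = (\<Sum>q\<in>F. cnj (c q) * c q)"
    by (rule sum.cong) (auto simp: mult.commute)
  with vB0 have vB: "integral\<^sup>L haar B = (\<Sum>q\<in>F. cnj (c q) * c q)" by simp
  have vC: "integral\<^sup>L haar C = (\<Sum>q\<in>F. cnj (c q) * c q)"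
  proof -
    have "integral\<^sup>L haar C = (\<Sum>q\<in>F. \<Sum>q'\<in>F. (c q * cnj (c q')) * integral\<^sup>L haar (\<lambda>x. cnj (chr q x) * chr q' x))"
      unfolding C_def
    proof (subst Bochner_Integration.integral_sum)
      show "integrable haar (\<lambda>x. \<Sum>q'\<in>F. (c q * cnj (c q')) * (cnj (chr q x) * chr q' x))" for q
        by (intro Bochner_Integration.integrable_sum integrable_mult_right integrable_chr_chr)
      show "(\<Sum>q\<in>F. integral\<^sup>L haar (\<lambda>x. \<Sum>q'\<in>F. (c q * cnj (c q')) * (cnj (chr q x) * chr q' x))) =
        (\<Sum>q\<in>F. \<Sum>q'\<in>F. (c q * cnj (c q')) * integral\<^sup>L haar (\<lambda>x. cnj (chr q x) * chr q' x))"
      proof (intro sum.cong refl)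
        fix q
        show "integral\<^sup>L haar (\<lambda>x. \<Sum>q'\<in>F. (c q * cnj (c q')) * (cnj (chr q x) * chr q' x)) =
          (\<Sum>q'\<in>F. (c q * cnj (c q')) * integral\<^sup>L haar (\<lambda>x. cnj (chr q x) * chr q' x))"
          by (subst Bochner_Integration.integral_sum)
            (auto intro: integrable_mult_right integrable_chr_chr simp only: integral_mult_right_zero)
      qed
    qed
    also have "\<dots> = (\<Sum>q\<in>F. \<Sum>q'\<in>F. (c q * cnj (c q')) * (if q = q' then 1 else 0))"
    proof (intro sum.cong refl)
      fix q q' assume "q \<in> F" "q' \<in> F"
      then have "q \<in> Lambda" "q' \<in> Lambda" using F(2) by auto
      then show "(c q * cnj (c q')) * integral\<^sup>L haar (\<lambda>x. cnj (chr q x) * chr q' x) =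
          (c q * cnj (c q')) * (if q = q' then 1 else 0)" by (simp only: chr_orth_full)
    qed
    also have "\<dots> = (\<Sum>q\<in>F. cnj (c q) * c q)"
      using F(1) by (simp add: if_distrib sum.delta mult.commute cong: if_cong)
    finally show ?thesis .
  qed
  have "integral\<^sup>L haar (\<lambda>x. complex_of_real ((cmod (H x - u x))\<^sup>2)) =
        integral\<^sup>L haar (\<lambda>x. H x * H x - A x - B x + C x)"
    by (simp only: pw)
  also have "\<dots> = complex_of_real (integral\<^sup>L haar (\<lambda>x. (h x)\<^sup>2)) - (\<Sum>q\<in>F. cnj (c q) * c q)"
    using HH iA iB iC vA vB vC HHi by simp
  finally have eq: "complex_of_real (integral\<^sup>L haar (\<lambda>x. (cmod (H x - u x))\<^sup>2)) =
      complex_of_real (integral\<^sup>L haar (\<lambda>x. (h x)\<^sup>2)) - (\<Sum>q\<in>F. cnj (c q) * c q)"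
    by (simp only: integral_complex_of_real)
  have "(\<Sum>q\<in>F. cnj (c q) * c q) = complex_of_real (\<Sum>q\<in>F. (cmod (c q))\<^sup>2)"
    unfolding of_real_sum by (intro sum.cong refl) (subst complex_norm_square, simp add: mult.commute)
  then have "integral\<^sup>L haar (\<lambda>x. (cmod (H x - u x))\<^sup>2) = integral\<^sup>L haar (\<lambda>x. (h x)\<^sup>2) - (\<Sum>q\<in>F. (cmod (c q))\<^sup>2)"
  proof -
    assume a: "(\<Sum>q\<in>F. cnj (c q) * c q) = complex_of_real (\<Sum>q\<in>F. (cmod (c q))\<^sup>2)"
    have "complex_of_real (integral\<^sup>L haar (\<lambda>x. (cmod (H x - u x))\<^sup>2)) =
      complex_of_real (integral\<^sup>L haar (\<lambda>x. (h x)\<^sup>2) - (\<Sum>q\<in>F. (cmod (c q))\<^sup>2))"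
      unfolding of_real_diff eq a ..
    then show ?thesis by (simp only: of_real_eq_iff)
  qed
  moreover have "0 \<le> integral\<^sup>L haar (\<lambda>x. (cmod (H x - u x))\<^sup>2)"
    by (rule Bochner_Integration.integral_nonneg) simp
  ultimately show ?thesis unfolding c_def by linarith
qed



lemma cs_series:
  fixes a b e :: "nat \<Rightarrow> real"
  assumes sa: "summable a" and sb: "summable b" and a0: "\<And>j. 0 \<le> a j" and b0: "\<And>j. 0 \<le> b j"
    and e: "\<And>j. (e j)\<^sup>2 \<le> a j * b j"
  shows "summable e" "(suminf e)\<^sup>2 \<le> suminf a * suminf b"
proof -
  have ea: "\<bar>e j\<bar> \<le> sqrt (a j) * sqrt (b j)" for j
  proof -
    have "\<bar>e j\<bar> = sqrt ((e j)\<^sup>2)" by simp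
    also have "\<dots> \<le> sqrt (a j * b j)" using e by (rule real_sqrt_le_mono)
    finally show ?thesis by (simp add: real_sqrt_mult)
  qed
  have eb: "\<bar>e j\<bar> \<le> (a j + b j) / 2" for j
  proof -
    have "0 \<le> (sqrt (a j) - sqrt (b j))\<^sup>2" by simp
    then have "2 * (sqrt (a j) * sqrt (b j)) \<le> a j + b j"
      using a0[of j] b0[of j] by (simp add: power2_eq_square algebra_simps)
    then have "sqrt (a j) * sqrt (b j) \<le> (a j + b j) / 2" by simp
    with ea[of j] show ?thesis by (rule order_trans)
  qed
  have sab: "summable (\<lambda>j. (a j + b j) / 2)" using sa sb by (intro summable_divide summable_add)
  show se: "summable e"
    by (rule summable_comparison_test[OF _ sab]) (use eb in auto)
  have part: "(\<Sum>j<N. e j)\<^sup>2 \<le> suminf a * suminf b" for N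
  proof -
    have "\<bar>\<Sum>j<N. e j\<bar> \<le> (\<Sum>j<N. \<bar>e j\<bar>)" by (rule sum_abs)
    also have "\<dots> \<le> (\<Sum>j<N. sqrt (a j) * sqrt (b j))" by (intro sum_mono ea)
    finally have "\<bar>\<Sum>j<N. e j\<bar> \<le> (\<Sum>j<N. sqrt (a j) * sqrt (b j))" .
    then have "\<bar>\<Sum>j<N. e j\<bar>\<^sup>2 \<le> (\<Sum>j<N. sqrt (a j) * sqrt (b j))\<^sup>2"
      by (rule power_mono) simp
    also have "\<dots> \<le> (\<Sum>j<N. (sqrt (a j))\<^sup>2) * (\<Sum>j<N. (sqrt (b j))\<^sup>2)"
      by (rule Cauchy_Schwarz_ineq_sum)
    also have "\<dots> = (\<Sum>j<N. a j) * (\<Sum>j<N. b j)" using a0 b0 by simp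
    also have "\<dots> \<le> suminf a * suminf b"
      by (intro mult_mono sum_le_suminf sa sb) (auto intro: a0 b0 sum_nonneg suminf_nonneg sa)
    finally show ?thesis by simp
  qed
  have "(\<lambda>N. (\<Sum>j<N. e j)\<^sup>2) \<longlonglongrightarrow> (suminf e)\<^sup>2"
    by (intro tendsto_power summable_LIMSEQ se)
  then show "(suminf e)\<^sup>2 \<le> suminf a * suminf b"
    by (rule LIMSEQ_le_const2) (use part in auto)
qed



locale ptree =
  fixes r :: "nat \<Rightarrow> nat \<Rightarrow> real" and \<alpha> :: real and p :: "nat \<Rightarrow> nat \<Rightarrow> real"
  assumes r_pos: "\<And>n k. n \<ge> 1 \<Longrightarrow> k < 2^n \<Longrightarrow> r n k > 0"
    and alpha: "1 < \<alpha>" "\<alpha> < 2"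
    and r_bound: "\<And>n k. n \<ge> 1 \<Longrightarrow> k < 2^n \<Longrightarrow> r n k \<le> \<alpha> ^ n"
    and pH: "in_H1 r p"
begin

definition "rh = \<alpha> / 2"
definition "sg = sqrt rh"
definition "S n = H1_semi_sq r p n"
definition "Stot = suminf S"
definition "dd n x = ptilde p (Suc n) x - ptilde p n x"
definition "DD n k = p (Suc n) k - p n (k mod 2^n)"
definition "TT n = (\<Sum>j. sg^j * S (j + n))"
definition "VV n = sg^(Suc n) / (1 - sg) * (sg^(Suc n) * TT n)"
definition "EE n x = ennreal ((dd n x)\<^sup>2 / sg^(Suc n))"
definition "gg x = p 0 0 + (\<Sum>j. dd j x)"

lemma rh_pos: "0 < rh" and rh_lt1: "rh < 1" and sg_pos: "0 < sg" and sg_lt1: "sg < 1"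
  and sg_sq: "sg\<^sup>2 = rh"
  using alpha by (auto simp: rh_def sg_def)

lemma sg_div_nonneg[simp]: "0 \<le> (y::real)\<^sup>2 / sg^n" "0 \<le> (y::real)\<^sup>2 / (sg * sg^n)"
  using sg_pos by (auto intro!: divide_nonneg_pos)

lemma S_nonneg: "0 \<le> S n"
  unfolding S_def H1_semi_sq_def
  by (intro sum_nonneg divide_nonneg_pos) (auto intro!: r_pos)

lemma S_summable: "summable S"
  using pH by (simp add: in_H1_def S_def[abs_def])

lemma dd_res: "dd n = (\<lambda>x. DD n (res (Suc n) x))"
proof
  fix x
  have "res n x = res (Suc n) x mod 2^n" by (rule res_mod) simp
  then show "dd n x = DD n (res (Suc n) x)" by (simp add: dd_def DD_def ptilde_def)
qed

lemma dd_meas[measurable]: "dd n \<in> borel_measurable haar"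
  unfolding dd_res by (rule meas_res_fun)

lemma dd_sq_int: "integrable haar (\<lambda>x. (dd n x)\<^sup>2 / c)"
  unfolding dd_res by (rule integrable_res)

lemma dd_L2: "integral\<^sup>L haar (\<lambda>x. (dd n x)\<^sup>2) \<le> rh^(Suc n) * S n"
proof -
  have "integral\<^sup>L haar (\<lambda>x. (dd n x)\<^sup>2) = (\<Sum>k<2^Suc n. (DD n k)\<^sup>2) / 2^Suc n"
    unfolding dd_res by (rule integral_res_real)
  also have "(\<Sum>k<2^Suc n. (DD n k)\<^sup>2) \<le> (\<Sum>k<2^Suc n. \<alpha>^Suc n * ((DD n k)\<^sup>2 / r (Suc n) k))"
  proof (rule sum_mono)
    fix k :: nat assume "k \<in> {..<2^Suc n}"
    then have k: "k < 2^Suc n" by simp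
    have rp: "0 < r (Suc n) k" using r_pos[of "Suc n" k] k by simp
    have rb: "r (Suc n) k \<le> \<alpha>^Suc n" using r_bound[of "Suc n" k] k by simp
    have "(DD n k)\<^sup>2 = r (Suc n) k * ((DD n k)\<^sup>2 / r (Suc n) k)" using rp by simp
    also have "\<dots> \<le> \<alpha>^Suc n * ((DD n k)\<^sup>2 / r (Suc n) k)"
      by (rule mult_right_mono[OF rb]) (use rp in simp)
    finally show "(DD n k)\<^sup>2 \<le> \<alpha>^Suc n * ((DD n k)\<^sup>2 / r (Suc n) k)" .
  qed
  also have "(\<Sum>k<2^Suc n. \<alpha>^Suc n * ((DD n k)\<^sup>2 / r (Suc n) k)) = \<alpha>^Suc n * S n"
    by (simp add: S_def H1_semi_sq_def DD_def sum_distrib_left)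
  finally have "integral\<^sup>L haar (\<lambda>x. (dd n x)\<^sup>2) \<le> \<alpha>^Suc n * S n / 2^Suc n"
    by (simp add: divide_right_mono)
  also have "\<dots> = rh^(Suc n) * S n" by (simp add: rh_def power_divide)
  finally show ?thesis .
qed

lemma ptilde_tele: "ptilde p n x = p 0 0 + (\<Sum>j<n. dd j x)"
  by (induction n) (auto simp: ptilde_def dd_def)

lemma EE_meas[measurable]: "EE n \<in> borel_measurable haar"
proof -
  have "EE n = (\<lambda>x. (\<lambda>k. ennreal ((DD n k)\<^sup>2 / sg^(Suc n))) (res (Suc n) x))"
    by (rule ext) (simp add: EE_def dd_res)
  then show ?thesis by (simp only:) (rule meas_res_fun)
qed

lemma EE_int: "integral\<^sup>N haar (EE n) \<le> ennreal (sg^(Suc n) * S n)"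
proof -
  have "integral\<^sup>N haar (EE n) = ennreal (integral\<^sup>L haar (\<lambda>x. (dd n x)\<^sup>2 / sg^(Suc n)))"
    unfolding EE_def by (rule nn_integral_eq_integral[OF dd_sq_int]) (simp add: sg_pos)
  also have "integral\<^sup>L haar (\<lambda>x. (dd n x)\<^sup>2 / sg^(Suc n)) = integral\<^sup>L haar (\<lambda>x. (dd n x)\<^sup>2) / sg^(Suc n)"
    by simp
  also have "\<dots> \<le> rh^(Suc n) * S n / sg^(Suc n)"
    by (rule divide_right_mono[OF dd_L2]) (simp add: sg_pos less_imp_le)
  also have "rh^(Suc n) * S n / sg^(Suc n) = sg^(Suc n) * S n"
  proof -
    have "rh^(Suc n) = sg^(Suc n) * sg^(Suc n)" by (simp add: sg_sq[symmetric] power_mult_distrib[symmetric] power2_eq_square)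
    then show ?thesis using sg_pos by simp
  qed
  finally show ?thesis by (simp add: ennreal_leI)
qed

lemma sgS_summable: "summable (\<lambda>j. sg^(Suc j) * S j)"
proof (rule summable_comparison_test[OF _ S_summable])
  show "\<exists>N. \<forall>n\<ge>N. norm (sg^(Suc n) * S n) \<le> S n"
  proof (intro exI allI impI)
    fix n :: nat
    have "sg^(Suc n) \<le> 1" using sg_pos sg_lt1 by (intro power_le_one) auto
    then show "norm (sg^(Suc n) * S n) \<le> S n"
      using S_nonneg[of n] sg_pos by (simp add: abs_mult mult_left_le_one_le)
  qed
qed

lemma AE_summ: "AE x in haar. summable (\<lambda>j. (dd j x)\<^sup>2 / sg^(Suc j))"
proof -
  have meas: "(\<lambda>x. \<Sum>j. EE j x) \<in> borel_measurable haar"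
    by (rule borel_measurable_suminf_order) (rule EE_meas)
  have "(\<integral>\<^sup>+ x. (\<Sum>j. EE j x) \<partial>haar) = (\<Sum>j. integral\<^sup>N haar (EE j))"
    by (rule nn_integral_suminf) (rule EE_meas)
  also have "\<dots> \<le> (\<Sum>j. ennreal (sg^(Suc j) * S j))"
    by (intro suminf_le EE_int summableI)
  also have "\<dots> = ennreal (\<Sum>j. sg^(Suc j) * S j)"
    by (rule suminf_ennreal2) (use S_nonneg sg_pos sgS_summable in auto)
  finally have "(\<integral>\<^sup>+ x. (\<Sum>j. EE j x) \<partial>haar) \<noteq> \<infinity>"
    by (auto simp: top_unique)
  from nn_integral_PInf_AE[OF meas this]
  show ?thesis
  proof (rule AE_mp, intro AE_I2 impI)
    fix x assume "(\<Sum>j. EE j x) \<noteq> \<infinity>"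
    then show "summable (\<lambda>j. (dd j x)\<^sup>2 / sg^(Suc j))"
      unfolding EE_def by (intro summable_suminf_not_top) (auto simp: sg_pos)
  qed
qed

lemma TT_summable: "summable (\<lambda>j. sg^j * S (j + n))"
proof (rule summable_comparison_test[OF _ summable_ignore_initial_segment[OF S_summable, of n]])
  show "\<exists>N. \<forall>j\<ge>N. norm (sg^j * S (j + n)) \<le> S (j + n)"
  proof (intro exI allI impI)
    fix j :: nat
    have "sg^j \<le> 1" using sg_pos sg_lt1 by (intro power_le_one) auto
    then show "norm (sg^j * S (j + n)) \<le> S (j + n)"
      using S_nonneg[of "j+n"] sg_pos by (simp add: abs_mult mult_left_le_one_le)
  qed
qed

lemma TT_nonneg: "0 \<le> TT n"
  unfolding TT_def using TT_summable S_nonneg sg_pos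
  by (intro suminf_nonneg) auto

lemma VV_nonneg: "0 \<le> VV n"
  unfolding VV_def using TT_nonneg[of n] sg_pos sg_lt1 by simp

lemma geo_shift: "summable (\<lambda>j. sg^(Suc (j + n)))" "(\<Sum>j. sg^(Suc (j + n))) = sg^(Suc n) / (1 - sg)"
proof -
  have eq: "(\<lambda>j. sg^(Suc (j + n))) = (\<lambda>j. sg^(Suc n) * sg^j)"
    by (rule ext) (simp add: power_add)
  have g: "summable (\<lambda>j. sg^j)" using sg_pos sg_lt1 by (intro summable_geometric) simp
  show "summable (\<lambda>j. sg^(Suc (j + n)))" unfolding eq by (intro summable_mult g)
  show "(\<Sum>j. sg^(Suc (j + n))) = sg^(Suc n) / (1 - sg)" unfolding eq
    using suminf_mult[OF g, of "sg^(Suc n)"] suminf_geometric[of sg] sg_pos sg_lt1 by simp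
qed

lemma tail_point:
  assumes sm: "summable (\<lambda>j. (dd j x)\<^sup>2 / sg^(Suc j))"
  shows "summable (\<lambda>j. dd j x)"
    and "(gg x - ptilde p n x)\<^sup>2 \<le> sg^(Suc n) / (1 - sg) * (\<Sum>j. (dd (j + n) x)\<^sup>2 / sg^(Suc (j + n)))"
proof -
  define a where "a j = sg^(Suc (j + n))" for j
  define b where "b j = (dd (j + n) x)\<^sup>2 / sg^(Suc (j + n))" for j
  define e where "e j = dd (j + n) x" for j
  have sa: "summable a" unfolding a_def by (rule geo_shift(1))
  have suma: "suminf a = sg^(Suc n) / (1 - sg)" unfolding a_def by (rule geo_shift(2))
  have sb: "summable b" unfolding b_def
    using summable_ignore_initial_segment[OF sm, of n] by simp
  have a0: "0 \<le> a j" for j unfolding a_def using sg_pos by simp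
  have b0: "0 \<le> b j" for j unfolding b_def by (rule sg_div_nonneg(1))
  have eab: "(e j)\<^sup>2 \<le> a j * b j" for j
    unfolding a_def b_def e_def using sg_pos by simp
  note cs = cs_series[OF sa sb a0 b0 eab]
  have se: "summable e" by (rule cs(1))
  show sd: "summable (\<lambda>j. dd j x)"
    using se summable_iff_shift[where f="\<lambda>j. dd j x" and k=n] unfolding e_def by simp
  have "gg x - ptilde p n x = suminf e"
    unfolding gg_def ptilde_tele e_def using suminf_split_initial_segment[OF sd, of n] by simp
  then have "(gg x - ptilde p n x)\<^sup>2 \<le> suminf a * suminf b" using cs(2) by simp
  then show "(gg x - ptilde p n x)\<^sup>2 \<le> sg^(Suc n) / (1 - sg) * (\<Sum>j. (dd (j + n) x)\<^sup>2 / sg^(Suc (j + n)))"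
    unfolding suma b_def .
qed

lemma gg_meas[measurable]: "gg \<in> borel_measurable haar"
  unfolding gg_def by (intro borel_measurable_add borel_measurable_const borel_measurable_suminf dd_meas)

lemma ptilde_meas[measurable]: "ptilde p n \<in> borel_measurable haar"
proof -
  have "ptilde p n = (\<lambda>x. p n (res n x))" by (rule ext) (simp add: ptilde_def)
  then show ?thesis by (simp only:) (rule meas_res_fun)
qed

lemma nn_tail: "(\<integral>\<^sup>+ x. ennreal ((gg x - ptilde p n x)\<^sup>2) \<partial>haar) \<le> ennreal (VV n)"
proof -
  define A where "A = sg^(Suc n) / (1 - sg)"
  have A0: "0 \<le> A" unfolding A_def using sg_pos sg_lt1 by simp
  have "(\<integral>\<^sup>+ x. ennreal ((gg x - ptilde p n x)\<^sup>2) \<partial>haar) \<le> (\<integral>\<^sup>+ x. ennreal A * (\<Sum>j. EE (j + n) x) \<partial>haar)"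
  proof (rule nn_integral_mono_AE)
    show "AE x in haar. ennreal ((gg x - ptilde p n x)\<^sup>2) \<le> ennreal A * (\<Sum>j. EE (j + n) x)"
      using AE_summ
    proof (rule AE_mp, intro AE_I2 impI)
      fix x assume sm: "summable (\<lambda>j. (dd j x)\<^sup>2 / sg^(Suc j))"
      have sb: "summable (\<lambda>j. (dd (j + n) x)\<^sup>2 / sg^(Suc (j + n)))"
        using summable_ignore_initial_segment[OF sm, of n] by simp
      have "ennreal ((gg x - ptilde p n x)\<^sup>2) \<le> ennreal (A * (\<Sum>j. (dd (j + n) x)\<^sup>2 / sg^(Suc (j + n))))"
        using tail_point(2)[OF sm, of n] unfolding A_def by (rule ennreal_leI)
      also have "\<dots> = ennreal A * ennreal (\<Sum>j. (dd (j + n) x)\<^sup>2 / sg^(Suc (j + n)))"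
        using A0 by (intro ennreal_mult suminf_nonneg sb) auto
      also have "ennreal (\<Sum>j. (dd (j + n) x)\<^sup>2 / sg^(Suc (j + n))) = (\<Sum>j. EE (j + n) x)"
        unfolding EE_def using sb by (intro suminf_ennreal2[symmetric]) auto
      finally show "ennreal ((gg x - ptilde p n x)\<^sup>2) \<le> ennreal A * (\<Sum>j. EE (j + n) x)" .
    qed
  qed
  also have "\<dots> = ennreal A * (\<Sum>j. integral\<^sup>N haar (EE (j + n)))"
  proof -
    have m: "(\<lambda>x. \<Sum>j. EE (j + n) x) \<in> borel_measurable haar"
      by (rule borel_measurable_suminf_order) (rule EE_meas)
    show ?thesis
      by (subst nn_integral_cmult[OF m]) (subst nn_integral_suminf, auto intro: EE_meas)
  qed
  also have "\<dots> \<le> ennreal A * (\<Sum>j. ennreal (sg^(Suc (j + n)) * S (j + n)))"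
    by (intro mult_left_mono suminf_le EE_int summableI) auto
  also have "(\<Sum>j. ennreal (sg^(Suc (j + n)) * S (j + n))) = ennreal (\<Sum>j. sg^(Suc (j + n)) * S (j + n))"
    by (rule suminf_ennreal2) (use S_nonneg sg_pos summable_ignore_initial_segment[OF sgS_summable, of n] in auto)
  also have "(\<Sum>j. sg^(Suc (j + n)) * S (j + n)) = sg^(Suc n) * TT n"
  proof -
    have "(\<lambda>j. sg^(Suc (j + n)) * S (j + n)) = (\<lambda>j. sg^(Suc n) * (sg^j * S (j + n)))"
      by (rule ext) (simp add: power_add)
    then show ?thesis unfolding TT_def using suminf_mult[OF TT_summable[of n], of "sg^(Suc n)"] by simp
  qed
  also have "ennreal A * ennreal (sg^(Suc n) * TT n) = ennreal (VV n)"
  proof -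
    have "ennreal A * ennreal (sg^(Suc n) * TT n) = ennreal (A * (sg^(Suc n) * TT n))"
      using A0 sg_pos TT_nonneg[of n] by (intro ennreal_mult[symmetric]) auto
    also have "A * (sg^(Suc n) * TT n) = VV n" unfolding A_def VV_def by simp
    finally show ?thesis .
  qed
  finally show ?thesis .
qed

lemma tail_L2: "integrable haar (\<lambda>x. (gg x - ptilde p n x)\<^sup>2)"
  "integral\<^sup>L haar (\<lambda>x. (gg x - ptilde p n x)\<^sup>2) \<le> VV n"
proof -
  have m: "(\<lambda>x. (gg x - ptilde p n x)\<^sup>2) \<in> borel_measurable haar" by measurable
  show "integrable haar (\<lambda>x. (gg x - ptilde p n x)\<^sup>2)"
    by (rule integrableI_nonneg[OF m]) (use nn_tail[of n] in \<open>auto simp: top_unique less_top[symmetric] intro: le_less_trans\<close>)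
  have "integral\<^sup>L haar (\<lambda>x. (gg x - ptilde p n x)\<^sup>2) = enn2real (\<integral>\<^sup>+ x. ennreal ((gg x - ptilde p n x)\<^sup>2) \<partial>haar)"
    by (rule integral_eq_nn_integral[OF m]) simp
  also have "\<dots> \<le> VV n" by (rule enn2real_leI[OF VV_nonneg nn_tail])
  finally show "integral\<^sup>L haar (\<lambda>x. (gg x - ptilde p n x)\<^sup>2) \<le> VV n" .
qed

end



context ptree
begin

lemma weight_bound:
  assumes q: "q \<in> Lambda" and o: "dyad_ord q = Suc n"
  shows "(1 + abs2 q) powr (2 * ((1 - log 2 \<alpha>) / 2)) \<le> (1 / rh) ^ Suc (Suc n)"
proof -
  define t where "t = 1 - log 2 \<alpha>"
  have t0: "0 \<le> t" unfolding t_def using alpha by simp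
  have q0: "q \<noteq> 0"
  proof
    assume "q = 0"
    then have "dyad_ord q = 0" unfolding dyad_ord_def by (intro Least_equality) auto
    with o show False by simp
  qed
  have a: "abs2 q = 2 ^ Suc n" using q0 o by (simp add: abs2_def)
  have "(1 + abs2 q) powr (2 * ((1 - log 2 \<alpha>) / 2)) = (1 + 2 ^ Suc n) powr t"
  proof -
    have "2 * ((1 - log 2 \<alpha>) / 2) = t" by (simp add: t_def)
    then show ?thesis by (simp only: a)
  qed
  also have "\<dots> \<le> (2 ^ Suc (Suc n)) powr t"
  proof (rule powr_mono2[OF t0])
    show "0 \<le> 1 + (2::real) ^ Suc n" by simp
    have "(1::real) \<le> 2^Suc n" by (rule one_le_power) simp
    then show "1 + (2::real) ^ Suc n \<le> 2 ^ Suc (Suc n)" by simp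
  qed
  also have "(2 ^ Suc (Suc n) :: real) = 2 powr (real (Suc (Suc n)))"
    by (rule powr_realpow[symmetric]) simp
  also have "(2 powr (real (Suc (Suc n)))) powr t = (2 powr t) ^ Suc (Suc n)"
    by (simp only: powr_powr) (subst powr_power, simp_all)
  also have "2 powr t = 1 / rh"
  proof -
    have "2 powr t = 2 powr 1 / 2 powr (log 2 \<alpha>)" unfolding t_def by (rule powr_diff)
    also have "\<dots> = 2 / \<alpha>" using alpha by simp
    finally show ?thesis by (simp add: rh_def)
  qed
  finally show ?thesis .
qed

lemma TT_le: "TT n \<le> Stot"
proof -
  have "TT n \<le> (\<Sum>j. S (j + n))"
    unfolding TT_def
  proof (rule suminf_le[OF _ TT_summable summable_ignore_initial_segment[OF S_summable]])
    fix j
    have "sg^j \<le> 1" using sg_pos sg_lt1 by (intro power_le_one) auto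
    then show "sg^j * S (j + n) \<le> S (j + n)"
      using S_nonneg[of "j+n"] sg_pos by (intro mult_left_le_one_le) auto
  qed
  also have "\<dots> \<le> Stot"
    unfolding Stot_def using suminf_split_initial_segment[OF S_summable, of n] S_nonneg
    by (simp add: sum_nonneg)
  finally show ?thesis .
qed

lemma Stot_nonneg: "0 \<le> Stot"
  unfolding Stot_def using S_summable S_nonneg by (intro suminf_nonneg) auto

lemma sum_TT: "(\<Sum>n<N. TT n) \<le> Stot / (1 - sg)"
proof -
  have "(\<Sum>n<N. TT n) = (\<Sum>j. \<Sum>n<N. sg^j * S (j + n))"
    unfolding TT_def by (rule suminf_sum[symmetric]) (rule TT_summable)
  also have "\<dots> \<le> (\<Sum>j. sg^j * Stot)"
  proof (rule suminf_le)
    fix j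
    have "(\<Sum>n<N. S (j + n)) = sum S ((\<lambda>n. j + n) ` {..<N})"
      by (simp add: sum.reindex)
    also have "\<dots> \<le> Stot" unfolding Stot_def
      by (rule sum_le_suminf[OF S_summable]) (auto intro: S_nonneg)
    finally have "(\<Sum>n<N. S (j + n)) \<le> Stot" .
    then show "(\<Sum>n<N. sg^j * S (j + n)) \<le> sg^j * Stot"
      using sg_pos by (simp add: sum_distrib_left[symmetric] mult_left_mono)
  next
    show "summable (\<lambda>j. \<Sum>n<N. sg^j * S (j + n))"
      by (intro summable_sum TT_summable)
  next
    show "summable (\<lambda>j. sg^j * Stot)"
      using sg_pos sg_lt1 by (intro summable_mult2 summable_geometric) simp
  qed
  also have "\<dots> = Stot / (1 - sg)"
    using suminf_mult2[of "\<lambda>j. sg^j" Stot] summable_geometric[of sg] suminf_geometric[of sg] sg_pos sg_lt1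
    by simp
  finally show ?thesis .
qed

lemma VV_le: "VV n \<le> sg^(Suc n) / (1 - sg) * (sg^(Suc n) * Stot)"
  unfolding VV_def using TT_le[of n] sg_pos sg_lt1
  by (intro mult_left_mono) (auto intro!: divide_nonneg_pos)

lemma VV0_le: "VV 0 \<le> Stot / (1 - sg)"
proof -
  have "VV 0 \<le> sg / (1 - sg) * (sg * Stot)" using VV_le[of 0] by simp
  also have "\<dots> \<le> 1 / (1 - sg) * (1 * Stot)"
    using sg_pos sg_lt1 Stot_nonneg
    by (intro mult_mono divide_right_mono) (auto intro!: divide_nonneg_pos mult_nonneg_nonneg)
  finally show ?thesis by simp
qed

lemma ptilde0: "ptilde p 0 x = p 0 0"
  by (simp add: ptilde_def)

lemma gg_L2: "in_L2 gg" "integral\<^sup>L haar (\<lambda>x. (gg x)\<^sup>2) \<le> 2 * (p 0 0)\<^sup>2 + 2 * (Stot / (1 - sg))"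
proof -
  define f where "f x = 2 * (gg x - ptilde p 0 x)\<^sup>2 + 2 * (p 0 0)\<^sup>2" for x
  have fi: "integrable haar f" unfolding f_def
    by (intro Bochner_Integration.integrable_add integrable_mult_right tail_L2(1) HP.integrable_const)
  have le: "(gg x)\<^sup>2 \<le> f x" for x
  proof -
    have "0 \<le> (gg x - 2 * p 0 0)\<^sup>2" by simp
    then show ?thesis unfolding f_def ptilde0 by (simp add: power2_eq_square algebra_simps)
  qed
  have gi: "integrable haar (\<lambda>x. (gg x)\<^sup>2)"
  proof (rule Bochner_Integration.integrable_bound[OF fi])
    show "(\<lambda>x. (gg x)\<^sup>2) \<in> borel_measurable haar" by measurable
    show "AE x in haar. norm ((gg x)\<^sup>2) \<le> norm (f x)"
    proof (rule AE_I2)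
      fix x
      have "0 \<le> (gg x)\<^sup>2" by simp
      moreover note le[of x]
      ultimately show "norm ((gg x)\<^sup>2) \<le> norm (f x)" by simp
    qed
  qed
  show "in_L2 gg" unfolding in_L2_def using gi gg_meas by simp
  have "integral\<^sup>L haar (\<lambda>x. (gg x)\<^sup>2) \<le> integral\<^sup>L haar f"
    by (rule integral_mono[OF gi fi le])
  also have "integral\<^sup>L haar f = 2 * integral\<^sup>L haar (\<lambda>x. (gg x - ptilde p 0 x)\<^sup>2) + 2 * (p 0 0)\<^sup>2"
    unfolding f_def using tail_L2(1)[of 0] HP.prob_space by (simp add: Bochner_Integration.integral_add)
  also have "\<dots> \<le> 2 * (Stot / (1 - sg)) + 2 * (p 0 0)\<^sup>2"
    using tail_L2(2)[of 0] VV0_le by simp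
  finally show "integral\<^sup>L haar (\<lambda>x. (gg x)\<^sup>2) \<le> 2 * (p 0 0)\<^sup>2 + 2 * (Stot / (1 - sg))" by simp
qed

lemma conv: "(\<lambda>n. LINT x|haar. (ptilde p n x - gg x)\<^sup>2) \<longlonglongrightarrow> 0"
proof (rule tendsto_sandwich[of "\<lambda>_. 0" _ _ "\<lambda>n. sg^(Suc n) / (1 - sg) * (sg^(Suc n) * Stot)"])
  show "\<forall>\<^sub>F n in sequentially. 0 \<le> (LINT x|haar. (ptilde p n x - gg x)\<^sup>2)"
    by (intro always_eventually allI Bochner_Integration.integral_nonneg) simp
  show "\<forall>\<^sub>F n in sequentially. (LINT x|haar. (ptilde p n x - gg x)\<^sup>2) \<le> sg^(Suc n) / (1 - sg) * (sg^(Suc n) * Stot)"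
  proof (intro always_eventually allI)
    fix n
    have "(LINT x|haar. (ptilde p n x - gg x)\<^sup>2) = (LINT x|haar. (gg x - ptilde p n x)\<^sup>2)"
      by (simp add: power2_commute)
    then show "(LINT x|haar. (ptilde p n x - gg x)\<^sup>2) \<le> sg^(Suc n) / (1 - sg) * (sg^(Suc n) * Stot)"
      using tail_L2(2)[of n] VV_le[of n] by simp
  qed
  have z: "(\<lambda>n. sg^(Suc n)) \<longlonglongrightarrow> 0"
    using sg_pos sg_lt1 by (intro LIMSEQ_Suc[OF LIMSEQ_power_zero]) auto
  have "(\<lambda>n. sg^(Suc n) / (1 - sg) * (sg^(Suc n) * Stot)) \<longlonglongrightarrow> 0 / (1 - sg) * (0 * Stot)"
    by (intro tendsto_intros z) (use sg_lt1 in simp)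
  then show "(\<lambda>n. sg^(Suc n) / (1 - sg) * (sg^(Suc n) * Stot)) \<longlonglongrightarrow> 0" by simp
qed auto

end



definition Kc :: "real \<Rightarrow> real" where
  "Kc a = 2 + 2 / (1 - sqrt (a/2)) + 1 / ((a/2) * (1 - sqrt (a/2))\<^sup>2)"

context ptree
begin

lemma Kc_eq: "Kc \<alpha> = 2 + 2 / (1 - sg) + 1 / (rh * (1 - sg)\<^sup>2)"
  by (simp add: Kc_def sg_def rh_def)

lemma ptilde_int: "integrable haar (ptilde p n)"
proof -
  have "ptilde p n = (\<lambda>x. p n (res n x))" by (rule ext) (simp add: ptilde_def)
  then show ?thesis by (simp only:) (rule integrable_res)
qed

lemma fourier_shift:
  assumes q: "q \<in> Lambda" and n: "n < dyad_ord q"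
  shows "fourier (\<lambda>x. gg x - ptilde p n x) q = fourier gg q"
proof -
  have gi: "integrable haar gg" by (rule in_L2_integrable[OF gg_L2(1)])
  have "fourier (\<lambda>x. gg x - ptilde p n x) q =
     integral\<^sup>L haar (\<lambda>x. chr q x * complex_of_real (gg x) - chr q x * complex_of_real (ptilde p n x))"
    unfolding fourier_def by (simp add: right_diff_distrib)
  also have "\<dots> = fourier gg q - integral\<^sup>L haar (\<lambda>x. chr q x * complex_of_real (ptilde p n x))"
    unfolding fourier_def
    by (rule Bochner_Integration.integral_diff[OF integrable_chr_mult(1)[OF gi] integrable_chr_mult(1)[OF ptilde_int]])
  also have "integral\<^sup>L haar (\<lambda>x. chr q x * complex_of_real (ptilde p n x)) = 0"
    using chr_orth_level[OF q n, of "\<lambda>k. complex_of_real (p n k)"] by (simp add: ptilde_def)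
  finally show ?thesis by simp
qed

lemma diff_L2: "in_L2 (\<lambda>x. gg x - ptilde p n x)"
  unfolding in_L2_def using tail_L2(1)[of n] by simp

lemma sg_pow_sq: "sg^(Suc n) * sg^(Suc n) = rh^(Suc n)"
  by (simp add: sg_sq[symmetric] power_mult_distrib[symmetric] power2_eq_square)

lemma level_bound:
  assumes F: "finite F" "F \<subseteq> Lambda" and o: "\<And>q. q \<in> F \<Longrightarrow> dyad_ord q = Suc n"
  shows "sum (Hs_weight ((1 - log 2 \<alpha>) / 2) gg) F \<le> TT n / (rh * (1 - sg))"
proof -
  let ?h = "\<lambda>x. gg x - ptilde p n x"
  have "sum (Hs_weight ((1 - log 2 \<alpha>) / 2) gg) F \<le> (\<Sum>q\<in>F. (1 / rh) ^ Suc (Suc n) * (cmod (fourier gg q))\<^sup>2)"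
    unfolding Hs_weight_def
    by (intro sum_mono mult_right_mono weight_bound) (use F o in auto)
  also have "\<dots> = (1 / rh) ^ Suc (Suc n) * (\<Sum>q\<in>F. (cmod (fourier ?h q))\<^sup>2)"
    using F o by (simp add: sum_distrib_left fourier_shift subset_iff)
  also have "\<dots> \<le> (1 / rh) ^ Suc (Suc n) * integral\<^sup>L haar (\<lambda>x. (?h x)\<^sup>2)"
    using rh_pos by (intro mult_left_mono bessel[OF diff_L2 F]) auto
  also have "\<dots> \<le> (1 / rh) ^ Suc (Suc n) * VV n"
    using rh_pos by (intro mult_left_mono tail_L2(2)) auto
  also have "\<dots> = TT n / (rh * (1 - sg))"
  proof -
    have "VV n = rh^(Suc n) * TT n / (1 - sg)" unfolding VV_def
      using sg_pow_sq[of n] by (simp add: field_simps)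
    have e1: "(1 / rh) ^ Suc (Suc n) * rh^(Suc n) = 1 / rh"
      using rh_pos by (simp add: power_one_over)
    have "(1 / rh) ^ Suc (Suc n) * VV n = ((1 / rh) ^ Suc (Suc n) * rh^(Suc n)) * TT n / (1 - sg)"
      unfolding \<open>VV n = rh^(Suc n) * TT n / (1 - sg)\<close> by simp
    also have "\<dots> = TT n / (rh * (1 - sg))" unfolding e1 by simp
    finally show ?thesis .
  qed
  finally show ?thesis .
qed

lemma level0_bound:
  assumes F: "finite F" "F \<subseteq> Lambda" and o: "\<And>q. q \<in> F \<Longrightarrow> dyad_ord q = 0"
  shows "sum (Hs_weight ((1 - log 2 \<alpha>) / 2) gg) F \<le> 2 * (p 0 0)\<^sup>2 + 2 * (Stot / (1 - sg))"
proof -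
  have "sum (Hs_weight ((1 - log 2 \<alpha>) / 2) gg) F = (\<Sum>q\<in>F. (cmod (fourier gg q))\<^sup>2)"
  proof (rule sum.cong[OF refl])
    fix q assume "q \<in> F"
    then have "q = 0" using F o lam_ord0 by auto
    then show "Hs_weight ((1 - log 2 \<alpha>) / 2) gg q = (cmod (fourier gg q))\<^sup>2"
      by (simp add: Hs_weight_def abs2_def)
  qed
  also have "\<dots> \<le> integral\<^sup>L haar (\<lambda>x. (gg x)\<^sup>2)" by (rule bessel[OF gg_L2(1) F])
  also have "\<dots> \<le> 2 * (p 0 0)\<^sup>2 + 2 * (Stot / (1 - sg))" by (rule gg_L2(2))
  finally show ?thesis .
qed

lemma Hs_weight_nonneg: "0 \<le> Hs_weight t f q"
  unfolding Hs_weight_def by simp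

lemma fin_bound:
  assumes F: "finite F" "F \<subseteq> Lambda"
  shows "sum (Hs_weight ((1 - log 2 \<alpha>) / 2) gg) F \<le>
     2 * (p 0 0)\<^sup>2 + 2 * (Stot / (1 - sg)) + Stot / (1 - sg) / (rh * (1 - sg))"
proof -
  let ?W = "Hs_weight ((1 - log 2 \<alpha>) / 2) gg"
  define N where "N = Max (insert 0 (dyad_ord ` F))"
  have oN: "dyad_ord q < Suc N" if "q \<in> F" for q
  proof -
    have "dyad_ord q \<le> N" unfolding N_def using F(1) that by (intro Max_ge) auto
    then show ?thesis by simp
  qed
  have "sum ?W F = (\<Sum>m<Suc N. sum ?W {q \<in> F. dyad_ord q = m})"
    by (rule sum.group[symmetric]) (use F(1) oN in auto)
  also have "\<dots> = sum ?W {q \<in> F. dyad_ord q = 0} + (\<Sum>n<N. sum ?W {q \<in> F. dyad_ord q = Suc n})"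
    by (rule sum.lessThan_Suc_shift)
  also have "\<dots> \<le> (2 * (p 0 0)\<^sup>2 + 2 * (Stot / (1 - sg))) + (\<Sum>n<N. TT n / (rh * (1 - sg)))"
  proof (rule add_mono)
    show "sum ?W {q \<in> F. dyad_ord q = 0} \<le> 2 * (p 0 0)\<^sup>2 + 2 * (Stot / (1 - sg))"
      by (rule level0_bound) (use F in auto)
    show "(\<Sum>n<N. sum ?W {q \<in> F. dyad_ord q = Suc n}) \<le> (\<Sum>n<N. TT n / (rh * (1 - sg)))"
      by (intro sum_mono level_bound) (use F in auto)
  qed
  also have "(\<Sum>n<N. TT n / (rh * (1 - sg))) = (\<Sum>n<N. TT n) / (rh * (1 - sg))"
    by (simp add: sum_divide_distrib)
  also have "\<dots> \<le> Stot / (1 - sg) / (rh * (1 - sg))"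
    using rh_pos sg_lt1 by (intro divide_right_mono sum_TT) auto
  finally show ?thesis by simp
qed

lemma H1_norm_eq: "H1_norm r p = sqrt ((p 0 0)\<^sup>2 + Stot)"
proof -
  have "S = H1_semi_sq r p" by (rule ext) (simp add: S_def)
  then show ?thesis by (simp add: H1_norm_def Stot_def)
qed

lemma B_le: "2 * (p 0 0)\<^sup>2 + 2 * (Stot / (1 - sg)) + Stot / (1 - sg) / (rh * (1 - sg)) \<le> Kc \<alpha> * ((p 0 0)\<^sup>2 + Stot)"
proof -
  define u where "u = 1 / (1 - sg)"
  define v where "v = 1 / (rh * (1 - sg)\<^sup>2)"
  define a where "a = (p 0 0)\<^sup>2"
  have u0: "0 \<le> u" unfolding u_def using sg_lt1 by simp
  have v0: "0 \<le> v" unfolding v_def using sg_lt1 rh_pos by simp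
  have a0: "0 \<le> a" unfolding a_def by simp
  have e1: "Stot / (1 - sg) = Stot * u" unfolding u_def by simp
  have e2: "Stot / (1 - sg) / (rh * (1 - sg)) = Stot * v" unfolding v_def by (simp add: power2_eq_square)
  have K: "Kc \<alpha> = 2 + 2 * u + v" unfolding Kc_eq u_def v_def by simp
  have "0 \<le> 2 * Stot + 2 * (u * a) + v * a"
    using Stot_nonneg u0 v0 a0 by (intro add_nonneg_nonneg mult_nonneg_nonneg) auto
  then show ?thesis unfolding e2 unfolding e1 K a_def[symmetric] by (simp add: algebra_simps)
qed

lemma main: "in_L2 gg \<and> ((\<lambda>n. LINT x|haar. (ptilde p n x - gg x)\<^sup>2) \<longlonglongrightarrow> 0)
    \<and> in_Hs ((1 - log 2 \<alpha>) / 2) gg \<and> Hs_norm ((1 - log 2 \<alpha>) / 2) gg \<le> sqrt (Kc \<alpha>) * H1_norm r p"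
proof -
  let ?W = "Hs_weight ((1 - log 2 \<alpha>) / 2) gg"
  define B where "B = 2 * (p 0 0)\<^sup>2 + 2 * (Stot / (1 - sg)) + Stot / (1 - sg) / (rh * (1 - sg))"
  have fb: "\<And>F. finite F \<Longrightarrow> F \<subseteq> Lambda \<Longrightarrow> sum ?W F \<le> B"
    unfolding B_def by (rule fin_bound)
  have sm: "?W summable_on Lambda"
  proof (rule nonneg_bounded_partial_sums_imp_summable_on)
    show "0 \<le> ?W x" for x by (rule Hs_weight_nonneg)
    show "\<forall>\<^sub>F X in finite_subsets_at_top Lambda. sum ?W X \<le> B"
      unfolding eventually_finite_subsets_at_top by (intro exI[of _ "{}"]) (auto intro: fb)
  qed
  have inf: "infsum ?W Lambda \<le> B" by (rule infsum_le_finite_sums[OF sm fb])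
  have "Hs_norm ((1 - log 2 \<alpha>) / 2) gg \<le> sqrt B"
    unfolding Hs_norm_def using inf by simp
  also have "\<dots> \<le> sqrt (Kc \<alpha> * ((p 0 0)\<^sup>2 + Stot))"
    unfolding B_def using B_le by simp
  also have "\<dots> = sqrt (Kc \<alpha>) * H1_norm r p"
    by (simp add: H1_norm_eq real_sqrt_mult)
  finally have hn: "Hs_norm ((1 - log 2 \<alpha>) / 2) gg \<le> sqrt (Kc \<alpha>) * H1_norm r p" .
  show ?thesis using gg_L2(1) conv sm hn by (simp add: in_Hs_def)
qed

end


theorem theorem3p2:
  fixes r :: "nat \<Rightarrow> nat \<Rightarrow> real" and \<alpha> :: real
  assumes r_pos: "\<And>n k. n \<ge> 1 \<Longrightarrow> k < 2^n \<Longrightarrow> r n k > 0"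
    and alpha: "1 < \<alpha>" "\<alpha> < 2"
    and r_bound: "\<And>n k. n \<ge> 1 \<Longrightarrow> k < 2^n \<Longrightarrow> r n k \<le> \<alpha> ^ n"
  shows "\<exists>C. \<forall>p. in_H1 r p \<longrightarrow>
           (\<exists>g. in_L2 g
              \<and> ((\<lambda>n. LINT x|haar. (ptilde p n x - g x)^2) \<longlonglongrightarrow> 0)
              \<and> in_Hs ((1 - log 2 \<alpha>) / 2) g
              \<and> Hs_norm ((1 - log 2 \<alpha>) / 2) g \<le> C * H1_norm r p)"
proof (intro exI[of _ "sqrt (Kc \<alpha>)"] allI impI)
  fix p assume pH: "in_H1 r p"
  interpret ptree r \<alpha> p
    by unfold_locales (use r_pos alpha r_bound pH in auto)
  show "\<exists>g. in_L2 g
              \<and> ((\<lambda>n. LINT x|haar. (ptilde p n x - g x)^2) \<longlonglongrightarrow> 0)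
              \<and> in_Hs ((1 - log 2 \<alpha>) / 2) g
              \<and> Hs_norm ((1 - log 2 \<alpha>) / 2) g \<le> sqrt (Kc \<alpha>) * H1_norm r p"
    using main by blast
qed

end
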